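(* Let $\nu\in\mathbb{C}$ and $\mathrm{Re}(x)<\mathrm{Re}(\nu)$. Let $U$ be a Hankel-type contour in the $t$-plane that starts at $+\infty$ above the real axis, circles the origin counterclockwise, and returns to $+\infty$ below the real axis, such that $t^{-\nu}\big[\frac12(t-\frac1t)+1\big]^x$ vanishes at the endpoints of $U$. Define \[ y_\nu(x)=\int_U t^{-\nu-1}\Big[\frac12\Big(t-\frac1t\Big)+1\Big]^x\,dt . \] Then (i) $y_\nu$ satisfies the delay-difference equations \[ x\,\Delta y_\nu(x-1)+\nu y_\nu(x)-x\,y_{\nu-1}(x-1)=0,\qquad x\,\Delta y_\nu(x-1)-\nu y_\nu(x)+x\,y_{\nu+1}(x-1)=0; \] (ii) $y_\nu$ solves the difference Bessel equation of order $\nu$: \[ x(x-1)\Delta^2y(x-2)+x\Delta y(x-1)+x(x-1)y(x-2)-\nu^2y(x)=0 . \]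
   Context: $\Delta$ is the forward difference operator: $\Delta g(x)=g(x+1)-g(x)$, so $\Delta g(x-1)=g(x)-g(x-1)$ and $\Delta^2g=\Delta(\Delta g)$. *)

theory Defs
  imports "HOL-Complex_Analysis.Complex_Analysis"
begin

text \<open>Logarithm with branch cut along the non-negative real axis, argument in (0, 2 pi).
  This is the branch of log t used for t powers along a Hankel contour wrapping the
  positive real axis.\<close>
definition logU :: "complex \<Rightarrow> complex" where
  "logU t = Ln (- t) + \<i> * pi"

definition powU :: "complex \<Rightarrow> complex \<Rightarrow> complex" where
  "powU t a = exp (a * logU t)"

definition wB :: "complex \<Rightarrow> complex" where
  "wB t = (t - 1 / t) / 2 + 1"

definition hank_integrand :: "complex \<Rightarrow> complex \<Rightarrow> complex \<Rightarrow> complex" where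
  "hank_integrand \<nu> x t = powU t (- \<nu> - 1) * (wB t powr x)"

text \<open>Domain of holomorphy of the integrand: the plane cut along [0, +inf) and (-inf, -1-sqrt 2].\<close>
definition hank_domain :: "complex set" where
  "hank_domain = - {t. Im t = 0 \<and> (0 \<le> Re t \<or> Re t \<le> - 1 - sqrt 2)}"

text \<open>A Hankel-type contour, parametrised by the whole real line: starts at +inf above the
  real axis (parameter to -inf), circles the origin inside the cut plane (hence
  counterclockwise), and returns to +inf below the real axis (parameter to +inf).\<close>
definition hankel_contour :: "(real \<Rightarrow> complex) \<Rightarrow> bool" where
  "hankel_contour \<gamma> \<longleftrightarrow>
     (\<forall>R. \<gamma> piecewise_C1_differentiable_on {-R..R}) \<and>
     (\<forall>s. \<gamma> s \<in> hank_domain) \<and>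
     filterlim (\<lambda>s. Re (\<gamma> s)) at_top at_bot \<and>
     filterlim (\<lambda>s. Re (\<gamma> s)) at_top at_top \<and>
     (\<forall>\<^sub>F s in at_bot. Im (\<gamma> s) > 0) \<and>
     (\<forall>\<^sub>F s in at_top. Im (\<gamma> s) < 0)"

definition hseg :: "(real \<Rightarrow> complex) \<Rightarrow> real \<Rightarrow> real \<Rightarrow> complex" where
  "hseg \<gamma> R = (\<lambda>s. \<gamma> (- R + 2 * R * s))"

definition hank_y :: "(real \<Rightarrow> complex) \<Rightarrow> complex \<Rightarrow> complex \<Rightarrow> complex" where
  "hank_y \<gamma> \<nu> x = Lim at_top (\<lambda>R. contour_integral (hseg \<gamma> R) (hank_integrand \<nu> x))"

end

theory Submission
  imports Defs
begin

lemma dom_facts: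
  assumes "t \<in> hank_domain"
  shows "t \<noteq> 0" "- t \<notin> \<real>\<^sub>\<le>\<^sub>0" "wB t \<notin> \<real>\<^sub>\<le>\<^sub>0" "wB t \<noteq> 0"
proof -
  have A: "\<not> (Im t = 0 \<and> (0 \<le> Re t \<or> Re t \<le> - 1 - sqrt 2))"
    using assms by (auto simp: hank_domain_def)
  then show t0: "t \<noteq> 0" by auto
  show "- t \<notin> \<real>\<^sub>\<le>\<^sub>0" using A by (auto simp: complex_nonpos_Reals_iff)
  have Imw: "Im (wB t) = (Im t + Im t / ((Re t)^2 + (Im t)^2)) / 2"
    by (simp add: wB_def Im_divide power2_eq_square)
  have "wB t \<notin> \<real>\<^sub>\<le>\<^sub>0"
  proof (cases "Im t = 0")
    case False
    have "(Re t)^2 + (Im t)^2 > 0" using False by (simp add: add_nonneg_pos)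
    then have pos: "1 + 1 / ((Re t)^2 + (Im t)^2) > 0" by (simp add: add_pos_pos)
    have "Im t + Im t / ((Re t)^2 + (Im t)^2) = Im t * (1 + 1 / ((Re t)^2 + (Im t)^2))"
      by (simp add: algebra_simps)
    then have "Im t + Im t / ((Re t)^2 + (Im t)^2) \<noteq> 0"
      using False pos by simp
    then show ?thesis using Imw by (auto simp: complex_nonpos_Reals_iff)
  next
    case True
    define r where "r = Re t"
    have tr: "t = complex_of_real r" using True by (simp add: r_def complex_eq_iff)
    have r1: "r < 0" "- 1 - sqrt 2 < r" using A True r_def by auto
    have s2: "sqrt 2 * sqrt 2 = 2" by simp
    have "sqrt 2 > 1" by (simp add: real_less_rsqrt)
    have "(r+1)*(r+1) < 2"
    proof -
      have "r + 1 < sqrt 2" "-(sqrt 2) < r+1" using r1 \<open>sqrt 2 > 1\<close> by linarith+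
      then have "\<bar>r+1\<bar> < sqrt 2" by (simp add: abs_less_iff)
      then have "\<bar>r+1\<bar> * \<bar>r+1\<bar> < sqrt 2 * sqrt 2"
        by (meson abs_ge_zero mult_strict_mono' order_less_imp_le)
      then show ?thesis using s2 by (simp add: abs_mult[symmetric])
    qed
    then have "r*r + 2*r - 1 < 0" by (simp add: algebra_simps)
    then have "(r - 1/r)/2 + 1 > 0" using r1
      by (simp add: field_simps)
    moreover have "wB t = complex_of_real ((r - 1/r)/2 + 1)"
      by (simp add: wB_def tr)
    ultimately show ?thesis by (auto simp: complex_nonpos_Reals_iff)
  qed
  then show "wB t \<notin> \<real>\<^sub>\<le>\<^sub>0" .
  then show "wB t \<noteq> 0" by auto
qed

lemma open_dom: "open hank_domain"
proof -
  have "closed {t. Im t = 0 \<and> (0 \<le> Re t \<or> Re t \<le> - 1 - sqrt 2)}"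
  proof -
    have e: "{t. Im t = 0 \<and> (0 \<le> Re t \<or> Re t \<le> - 1 - sqrt 2)} =
       ({t. Im t = 0} \<inter> {t. 0 \<le> Re t}) \<union> ({t. Im t = 0} \<inter> {t. Re t \<le> - 1 - sqrt 2})" by auto
    show ?thesis unfolding e
      by (intro closed_Un closed_Int closed_Collect_eq closed_Collect_le continuous_intros)
  qed
  then show ?thesis by (simp add: hank_domain_def open_Compl)
qed

definition EE :: "complex \<Rightarrow> complex \<Rightarrow> complex \<Rightarrow> complex" where
  "EE \<mu> z t = (- \<mu> - 1) * logU t + z * Ln (wB t)"

definition gg :: "complex \<Rightarrow> complex \<Rightarrow> complex \<Rightarrow> complex" where
  "gg \<mu> z t = powU t (- \<mu>) * (wB t powr z)"

lemma F_exp: "t \<in> hank_domain \<Longrightarrow> hank_integrand \<mu> z t = exp (EE \<mu> z t)"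
  using dom_facts(4)[of t]
  by (simp add: hank_integrand_def EE_def powU_def powr_def exp_add)

lemma exp_logU: "t \<noteq> 0 \<Longrightarrow> exp (logU t) = t"
  by (simp add: logU_def exp_add)

lemma F_shift:
  assumes "t \<in> hank_domain"
  shows "hank_integrand \<mu> z t = hank_integrand \<mu> (z-1) t * wB t"
    "hank_integrand (\<mu>-1) (z-1) t = hank_integrand \<mu> (z-1) t * t"
    "hank_integrand (\<mu>+1) (z-1) t = hank_integrand \<mu> (z-1) t / t"
proof -
  note d = dom_facts[OF assms]
  show "hank_integrand \<mu> z t = hank_integrand \<mu> (z-1) t * wB t"
  proof -
    have "EE \<mu> z t = EE \<mu> (z-1) t + Ln (wB t)" by (simp add: EE_def algebra_simps)
    then show ?thesis using d by (simp add: F_exp[OF assms] exp_add)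
  qed
  show "hank_integrand (\<mu>-1) (z-1) t = hank_integrand \<mu> (z-1) t * t"
  proof -
    have "EE (\<mu>-1) (z-1) t = EE \<mu> (z-1) t + logU t" by (simp add: EE_def algebra_simps)
    then show ?thesis using d by (simp add: F_exp[OF assms] exp_add exp_logU)
  qed
  show "hank_integrand (\<mu>+1) (z-1) t = hank_integrand \<mu> (z-1) t / t"
  proof -
    have "EE (\<mu>+1) (z-1) t = EE \<mu> (z-1) t - logU t" by (simp add: EE_def algebra_simps)
    then show ?thesis using d by (simp add: F_exp[OF assms] exp_diff exp_logU)
  qed
qed

lemma F_B:
  assumes "t \<in> hank_domain"
  shows "hank_integrand \<mu> z t = hank_integrand \<mu> (z-1) t + hank_integrand (\<mu>-1) (z-1) t / 2
           - hank_integrand (\<mu>+1) (z-1) t / 2"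
proof -
  define P where "P = hank_integrand \<mu> (z-1) t"
  have w: "wB t = 1 + t/2 - (1/t)/2" by (simp add: wB_def diff_divide_distrib)
  have "P * (1 + t/2 - (1/t)/2) = P + P*t/2 - P/t/2" by (simp add: algebra_simps)
  then show ?thesis unfolding F_shift[OF assms, of \<mu> z] P_def[symmetric] w by simp
qed

lemma gg_eq: assumes "t \<in> hank_domain" shows "gg \<mu> z t = hank_integrand \<mu> z t * t"
proof -
  note d = dom_facts[OF assms]
  have "gg \<mu> z t = exp (- \<mu> * logU t + z * Ln (wB t))"
    using d by (simp add: gg_def powU_def powr_def mult_exp_exp algebra_simps)
  also have "- \<mu> * logU t + z * Ln (wB t) = EE \<mu> z t + logU t" by (simp add: EE_def algebra_simps)
  finally show ?thesis using d by (simp add: F_exp[OF assms] exp_add exp_logU)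
qed

lemma F_holo: "hank_integrand \<mu> z holomorphic_on hank_domain"
proof -
  have "(\<lambda>t. exp (EE \<mu> z t)) holomorphic_on hank_domain"
    unfolding EE_def logU_def wB_def
    using dom_facts
    by (intro holomorphic_intros holomorphic_on_Ln') (auto simp: wB_def)
  moreover have "hank_integrand \<mu> z holomorphic_on hank_domain \<longleftrightarrow> (\<lambda>t. exp (EE \<mu> z t)) holomorphic_on hank_domain"
    by (rule holomorphic_cong) (auto simp: F_exp)
  ultimately show ?thesis by simp
qed

lemma gg_deriv:
  assumes "t \<in> hank_domain"
  shows "(gg \<mu> z has_field_derivative
     (- \<mu> * hank_integrand \<mu> z t + z / 2 * (hank_integrand (\<mu>-1) (z-1) t + hank_integrand (\<mu>+1) (z-1) t))) (at t)"
proof -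
  note d = dom_facts[OF assms]
  define H where "H = (\<lambda>t. - \<mu> * (Ln (-t) + \<i> * pi) + z * Ln (wB t))"
  have dw: "(wB has_field_derivative (1 + 1 / t^2) / 2) (at t)"
    unfolding wB_def using d(1)
    by (auto intro!: derivative_eq_intros simp: field_simps power2_eq_square)
  have dL1: "((\<lambda>t. Ln (-t)) has_field_derivative inverse (-t) * (-1)) (at t)"
  proof -
    have "((\<lambda>t. -t) has_field_derivative -1) (at t)" by (auto intro!: derivative_eq_intros)
    from DERIV_chain2[OF has_field_derivative_Ln[OF d(2)] this] show ?thesis .
  qed
  have dL2: "((\<lambda>t. Ln (wB t)) has_field_derivative inverse (wB t) * ((1 + 1 / t^2) / 2)) (at t)"
    by (rule DERIV_chain2[OF has_field_derivative_Ln[OF d(3)] dw])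
  have dH: "(H has_field_derivative (- \<mu> * (inverse (-t) * (-1)) + z * (inverse (wB t) * ((1 + 1 / t^2) / 2)))) (at t)"
    unfolding H_def
    using DERIV_add[OF DERIV_cmult[OF DERIV_add[OF dL1 DERIV_const]] DERIV_cmult[OF dL2], of "- \<mu>" "\<i> * pi" z]
    by simp
  have dE: "((\<lambda>t. exp (H t)) has_field_derivative exp (H t) * (- \<mu> * (inverse (-t) * (-1)) + z * (inverse (wB t) * ((1 + 1 / t^2) / 2)))) (at t)"
    by (rule DERIV_chain2[OF DERIV_exp dH])
  have eq: "\<And>s. s \<in> hank_domain \<Longrightarrow> exp (H s) = gg \<mu> z s"
    using dom_facts by (simp add: H_def gg_def powU_def logU_def powr_def mult_exp_exp algebra_simps)
  have "(gg \<mu> z has_field_derivative exp (H t) * (- \<mu> * (inverse (-t) * (-1)) + z * (inverse (wB t) * ((1 + 1 / t^2) / 2)))) (at t)"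
    by (rule has_field_derivative_transform_within_open[OF dE open_dom assms eq])
  moreover have "exp (H t) * (- \<mu> * (inverse (-t) * (-1)) + z * (inverse (wB t) * ((1 + 1 / t^2) / 2)))
     = - \<mu> * hank_integrand \<mu> z t + z / 2 * (hank_integrand (\<mu>-1) (z-1) t + hank_integrand (\<mu>+1) (z-1) t)"
  proof -
    have "exp (H t) = hank_integrand \<mu> (z-1) t * wB t * t"
      using eq[OF assms] gg_eq[OF assms] F_shift(1)[OF assms, of \<mu> z] by simp
    then show ?thesis
      unfolding F_shift[OF assms, of \<mu> z] using d(1) d(4)
      by (simp add: field_simps power2_eq_square)
  qed
  ultimately show ?thesis by simp
qed

lemma absImLn: "z \<noteq> 0 \<Longrightarrow> \<bar>Im (Ln z)\<bar> \<le> pi"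
  using Arg_eq_Im_Ln[of z] mpi_less_Arg[of z] Arg_le_pi[of z] by auto

lemma wB_bounds:
  assumes "5 \<le> cmod t"
  shows "cmod t / 4 \<le> cmod (wB t)" "cmod (wB t) \<le> 2 * cmod t"
proof -
  have t0: "t \<noteq> 0" using assms by auto
  define u where "u = 1 - 1 / (2*t)"
  have w: "wB t = t/2 + u" unfolding u_def wB_def using t0 by (simp add: field_simps)
  have "cmod (1 / (2*t)) = 1 / (2 * cmod t)" by (simp add: norm_divide norm_mult)
  also have "\<dots> \<le> 1/10" by (rule frac_le) (use assms in auto)
  finally have "cmod u \<le> 11/10" unfolding u_def
    using norm_triangle_ineq4[of 1 "1/(2*t)"] by simp
  moreover have "cmod (t/2) = cmod t / 2" by (simp add: norm_divide)
  ultimately show "cmod t / 4 \<le> cmod (wB t)" "cmod (wB t) \<le> 2 * cmod t"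
    unfolding w using norm_triangle_ineq[of "t/2" u] norm_diff_ineq[of "t/2" u] assms
    by linarith+
qed

lemma E_bound:
  fixes a b :: complex
  shows "\<exists>C>0. \<forall>t. 5 \<le> cmod t \<longrightarrow>
           cmod (exp (a * logU t + b * Ln (wB t))) \<le> C * cmod t powr (Re a + Re b)"
proof -
  define C where "C = exp (2*pi*\<bar>Im a\<bar> + pi*\<bar>Im b\<bar> + \<bar>Re b\<bar> * ln 4)"
  have "\<forall>t. 5 \<le> cmod t \<longrightarrow>
           cmod (exp (a * logU t + b * Ln (wB t))) \<le> C * cmod t powr (Re a + Re b)"
  proof (intro allI impI)
    fix t assume t5: "5 \<le> cmod t"
    have t0: "t \<noteq> 0" and tpos: "cmod t > 0" using t5 by auto
    note wb = wB_bounds[OF t5]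
    have w0: "wB t \<noteq> 0" using wb(1) tpos by auto
    have ReL: "Re (logU t) = ln (cmod t)" using t0 by (simp add: logU_def)
    have ImL: "\<bar>Im (logU t)\<bar> \<le> 2*pi" using absImLn[of "-t"] t0 by (simp add: logU_def)
    have ReW: "Re (Ln (wB t)) = ln (cmod (wB t))" using w0 by simp
    have ImW: "\<bar>Im (Ln (wB t))\<bar> \<le> pi" using absImLn[OF w0] .
    have lnw: "\<bar>ln (cmod (wB t)) - ln (cmod t)\<bar> \<le> ln 4"
    proof -
      have p: "cmod (wB t) > 0" using w0 by simp
      have "ln (cmod (wB t)) \<le> ln (2 * cmod t)" using wb(2) p tpos by simp
      also have "\<dots> = ln 2 + ln (cmod t)" using tpos by (simp add: ln_mult)
      finally have u: "ln (cmod (wB t)) \<le> ln 2 + ln (cmod t)" .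
      have "ln (cmod t / 4) \<le> ln (cmod (wB t))" using wb(1) tpos p by simp
      moreover have "ln (cmod t / 4) = ln (cmod t) - ln 4" using tpos by (simp add: ln_div)
      ultimately have l: "ln (cmod t) - ln 4 \<le> ln (cmod (wB t))" by simp
      have "ln 2 \<le> ln (4::real)" by simp
      then show ?thesis using u l by linarith
    qed
    have k1: "- Im a * Im (logU t) \<le> 2*pi*\<bar>Im a\<bar>"
    proof -
      have "- Im a * Im (logU t) \<le> \<bar>Im a\<bar> * \<bar>Im (logU t)\<bar>"
        using abs_ge_self[of "- Im a * Im (logU t)"] by (simp add: abs_mult)
      also have "\<dots> \<le> \<bar>Im a\<bar> * (2*pi)" by (rule mult_left_mono[OF ImL abs_ge_zero])
      finally show ?thesis by (simp add: mult.commute)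
    qed
    have k2: "- Im b * Im (Ln (wB t)) \<le> pi*\<bar>Im b\<bar>"
    proof -
      have "- Im b * Im (Ln (wB t)) \<le> \<bar>Im b\<bar> * \<bar>Im (Ln (wB t))\<bar>"
        using abs_ge_self[of "- Im b * Im (Ln (wB t))"] by (simp add: abs_mult)
      also have "\<dots> \<le> \<bar>Im b\<bar> * pi" by (rule mult_left_mono[OF ImW abs_ge_zero])
      finally show ?thesis by (simp add: mult.commute)
    qed
    have k3: "Re b * (ln (cmod (wB t)) - ln (cmod t)) \<le> \<bar>Re b\<bar> * ln 4"
    proof -
      have "Re b * (ln (cmod (wB t)) - ln (cmod t)) \<le> \<bar>Re b\<bar> * \<bar>ln (cmod (wB t)) - ln (cmod t)\<bar>"
        using abs_ge_self[of "Re b * (ln (cmod (wB t)) - ln (cmod t))"] by (simp add: abs_mult)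
      also have "\<dots> \<le> \<bar>Re b\<bar> * ln 4" by (rule mult_left_mono[OF lnw abs_ge_zero])
      finally show ?thesis .
    qed
    have "Re (a * logU t + b * Ln (wB t)) =
          Re a * ln (cmod t) - Im a * Im (logU t) + Re b * ln (cmod (wB t)) - Im b * Im (Ln (wB t))"
      using ReL ReW by simp
    also have "\<dots> \<le> (Re a + Re b) * ln (cmod t) + (2*pi*\<bar>Im a\<bar> + pi*\<bar>Im b\<bar> + \<bar>Re b\<bar> * ln 4)"
      using k1 k2 k3 by (simp add: algebra_simps)
    finally have "exp (Re (a * logU t + b * Ln (wB t))) \<le> exp ((Re a + Re b) * ln (cmod t) + (2*pi*\<bar>Im a\<bar> + pi*\<bar>Im b\<bar> + \<bar>Re b\<bar> * ln 4))"
      by simp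
    also have "\<dots> = C * cmod t powr (Re a + Re b)"
      using tpos by (simp add: C_def powr_def exp_add)
    finally show "cmod (exp (a * logU t + b * Ln (wB t))) \<le> C * cmod t powr (Re a + Re b)" by simp
  qed
  moreover have "C > 0" by (simp add: C_def)
  ultimately show ?thesis by blast
qed

lemma F_bound:
  "\<exists>C>0. \<forall>t. 5 \<le> cmod t \<longrightarrow> t \<in> hank_domain \<longrightarrow>
      cmod (hank_integrand \<mu> z t) \<le> C * cmod t powr (Re z - Re \<mu> - 1)"
proof -
  obtain C where C: "C>0" "\<forall>t. 5 \<le> cmod t \<longrightarrow> cmod (exp ((-\<mu>-1) * logU t + z * Ln (wB t))) \<le> C * cmod t powr (Re (-\<mu>-1) + Re z)"
    using E_bound by blast
  have e: "Re z - Re \<mu> - 1 = Re (-\<mu>-1) + Re z" by simp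
  show ?thesis unfolding e
  proof (intro exI[of _ C] conjI allI impI)
    fix t assume "5 \<le> cmod t" "t \<in> hank_domain"
    then show "cmod (hank_integrand \<mu> z t) \<le> C * cmod t powr (Re (-\<mu>-1) + Re z)"
      using C(2) F_exp[of t \<mu> z] unfolding EE_def by metis
  qed (use C in auto)
qed

lemma gg_bound:
  "\<exists>C>0. \<forall>t. 5 \<le> cmod t \<longrightarrow> t \<in> hank_domain \<longrightarrow>
      cmod (gg \<mu> z t) \<le> C * cmod t powr (Re z - Re \<mu>)"
proof -
  have g: "t \<in> hank_domain \<Longrightarrow> gg \<mu> z t = exp (- \<mu> * logU t + z * Ln (wB t))" for t
    using dom_facts[of t] by (simp add: gg_def powU_def powr_def mult_exp_exp)
  obtain C where C: "C>0" "\<forall>t. 5 \<le> cmod t \<longrightarrow> cmod (exp ((-\<mu>) * logU t + z * Ln (wB t))) \<le> C * cmod t powr (Re (-\<mu>) + Re z)"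
    using E_bound by blast
  have e: "Re z - Re \<mu> = Re (-\<mu>) + Re z" by simp
  show ?thesis unfolding e
  proof (intro exI[of _ C] conjI allI impI)
    fix t assume "5 \<le> cmod t" "t \<in> hank_domain"
    then show "cmod (gg \<mu> z t) \<le> C * cmod t powr (Re (-\<mu>) + Re z)"
      using C(2) g[of t] by metis
  qed (use C in auto)
qed

lemma gg_tendsto:
  assumes "Re z < Re \<mu>" "hankel_contour \<gamma>"
  shows "((\<lambda>s. gg \<mu> z (\<gamma> s)) \<longlongrightarrow> 0) at_top" "((\<lambda>s. gg \<mu> z (\<gamma> s)) \<longlongrightarrow> 0) at_bot"
proof -
  obtain C where C: "C > 0" "\<forall>t. 5 \<le> cmod t \<longrightarrow> t \<in> hank_domain \<longrightarrow>
      cmod (gg \<mu> z t) \<le> C * cmod t powr (Re z - Re \<mu>)" using gg_bound by blast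
  have dom: "\<And>s. \<gamma> s \<in> hank_domain" using assms(2) by (simp add: hankel_contour_def)
  have "\<And>F. filterlim (\<lambda>s. Re (\<gamma> s)) at_top F \<Longrightarrow> ((\<lambda>s. gg \<mu> z (\<gamma> s)) \<longlongrightarrow> 0) F"
  proof -
    fix F assume lim: "filterlim (\<lambda>s. Re (\<gamma> s)) at_top F"
    have lim2: "filterlim (\<lambda>s. cmod (\<gamma> s)) at_top F"
      by (rule filterlim_at_top_mono[OF lim]) (simp add: complex_Re_le_cmod)
    have ev: "eventually (\<lambda>s. 5 \<le> cmod (\<gamma> s)) F"
      using lim2 by (simp add: filterlim_at_top)
    show "((\<lambda>s. gg \<mu> z (\<gamma> s)) \<longlongrightarrow> 0) F"
    proof (rule Lim_null_comparison)
      show "eventually (\<lambda>s. norm (gg \<mu> z (\<gamma> s)) \<le> C * cmod (\<gamma> s) powr (Re z - Re \<mu>)) F"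
        using ev by eventually_elim (use C dom in auto)
      have "((\<lambda>s. cmod (\<gamma> s) powr (Re z - Re \<mu>)) \<longlongrightarrow> 0) F"
        by (rule tendsto_neg_powr) (use assms(1) lim2 in auto)
      then show "((\<lambda>s. C * cmod (\<gamma> s) powr (Re z - Re \<mu>)) \<longlongrightarrow> 0) F"
        by (rule tendsto_mult_right_zero)
    qed
  qed
  then show "((\<lambda>s. gg \<mu> z (\<gamma> s)) \<longlongrightarrow> 0) at_top" "((\<lambda>s. gg \<mu> z (\<gamma> s)) \<longlongrightarrow> 0) at_bot"
    using assms(2) by (auto simp: hankel_contour_def)
qed

lemma seg_bound:
  fixes G f :: "complex \<Rightarrow> complex" and p d :: complex and u c C e :: real
  assumes u: "u \<ge> 0" and c: "c > 0" and e: "e < -1" and C: "C \<ge> 0" and d: "cmod d = 1"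
    and deriv: "\<And>s. 0 \<le> s \<Longrightarrow> s \<le> u \<Longrightarrow> (G has_field_derivative f (p + of_real s * d)) (at (p + of_real s * d))"
    and bnd: "\<And>s. 0 \<le> s \<Longrightarrow> s \<le> u \<Longrightarrow> cmod (f (p + of_real s * d)) \<le> C * (c + s) powr e"
  shows "cmod (G (p + of_real u * d) - G p) \<le> C * c powr (e+1) / (-(e+1))"
proof (cases "u = 0")
  case True
  have "0 \<le> C * c powr (e+1) / (-(e+1))" using C e by (intro divide_nonneg_pos mult_nonneg_nonneg) auto
  then show ?thesis using True by simp
next
  case False
  then have u0: "0 < u" using u by simp
  define fs where "fs = (\<lambda>s::real. G (p + of_real s * d))"
  define \<phi> where "\<phi> = (\<lambda>s::real. C * (c + s) powr (e+1) / (e+1))"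
  have vd: "(fs has_vector_derivative (d * f (p + of_real s * d))) (at s)" if "0 \<le> s" "s \<le> u" for s
  proof -
    have "((\<lambda>s::real. p + of_real s * d) has_vector_derivative d) (at s)"
      by (auto intro!: derivative_eq_intros simp: has_vector_derivative_def scaleR_conv_of_real)
    from field_vector_diff_chain_at[OF this deriv[OF that]]
    show ?thesis by (simp add: fs_def o_def)
  qed
  have contf: "continuous_on {0..u} fs"
  proof (intro continuous_at_imp_continuous_on ballI)
    fix s assume "s \<in> {0..u}"
    then show "isCont fs s" using has_vector_derivative_continuous[OF vd] by auto
  qed
  have dphi: "(\<phi> has_vector_derivative C * (c + s) powr e) (at s)" if "0 \<le> s" for s
  proof -
    have "((\<lambda>s. (c + s) powr (e+1)) has_real_derivative (e+1) * (c+s) powr (e+1-1) * 1) (at s)"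
      by (rule DERIV_chain2[OF has_real_derivative_powr]) (use c that in \<open>auto intro!: derivative_eq_intros\<close>)
    then have "(\<phi> has_real_derivative C * ((e+1) * (c+s) powr (e+1-1) * 1) / (e+1)) (at s)"
      unfolding \<phi>_def by (intro DERIV_cdivide DERIV_cmult)
    moreover have "C * ((e+1) * (c+s) powr (e+1-1) * 1) / (e+1) = C * (c + s) powr e"
      using e by simp
    ultimately show ?thesis by (simp add: has_real_derivative_iff_has_vector_derivative)
  qed
  have contphi: "continuous_on {0..u} \<phi>"
  proof (intro continuous_at_imp_continuous_on ballI)
    fix s assume "s \<in> {0..u}"
    then show "isCont \<phi> s" using has_vector_derivative_continuous[OF dphi] by auto
  qed
  have "norm (fs u - fs 0) \<le> \<phi> u - \<phi> 0"
  proof (rule differentiable_bound_general[OF u0 contf contphi])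
    show "\<And>x. 0 < x \<Longrightarrow> x < u \<Longrightarrow> (fs has_vector_derivative d * f (p + complex_of_real x * d)) (at x)"
      using vd by auto
    show "\<And>x. 0 < x \<Longrightarrow> x < u \<Longrightarrow> (\<phi> has_vector_derivative C * (c + x) powr e) (at x)"
      using dphi by auto
    show "\<And>x. 0 < x \<Longrightarrow> x < u \<Longrightarrow> norm (d * f (p + complex_of_real x * d)) \<le> C * (c + x) powr e"
      using bnd d by (simp add: norm_mult)
  qed
  also have "\<phi> u - \<phi> 0 = C * (c powr (e+1) - (c+u) powr (e+1)) / (-(e+1))"
  proof -
    have gen0: "\<And>A B k::real. k \<noteq> 0 \<Longrightarrow> C*A/k - C*B/k = C*(B - A)/(-k)"
      by (simp add: field_simps)
    have gen: "\<And>A B. C*A/(e+1) - C*B/(e+1) = C*(B - A)/(-(e+1))"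
      using e by (intro gen0) simp
    show ?thesis unfolding \<phi>_def using gen[of "(c+u) powr (e+1)" "(c+0) powr (e+1)"] by simp
  qed
  also have "\<dots> \<le> C * c powr (e+1) / (-(e+1))"
    using C e by (intro divide_right_mono mult_left_mono) auto
  finally show ?thesis by (simp add: fs_def)
qed

lemma pt_bound:
  fixes C e c s :: real and q :: complex
  assumes e: "e < -1" and C: "C \<ge> 0" and cs: "c + s > 0" and q: "(c + s) / 2 \<le> cmod q"
    and b: "cmod (F q) \<le> C * cmod q powr e"
  shows "cmod (F q) \<le> C * 2 powr (-e) * (c + s) powr e"
proof -
  have "cmod q powr e \<le> ((c + s) / 2) powr e"
    by (rule powr_mono2') (use e cs q in auto)
  also have "\<dots> = 2 powr (-e) * (c + s) powr e"
    by (simp add: powr_divide powr_minus_divide)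
  finally have h: "cmod q powr e \<le> 2 powr (-e) * (c + s) powr e" .
  have "C * cmod q powr e \<le> C * (2 powr (-e) * (c + s) powr e)"
    by (rule mult_left_mono[OF h C])
  with b show ?thesis by (simp add: mult.assoc)
qed

lemma cauchy_Q:
  fixes \<sigma> C e K :: real and G F :: "complex \<Rightarrow> complex"
  assumes \<sigma>: "\<sigma> = 1 \<or> \<sigma> = -1" and e: "e < -1" and C: "C \<ge> 0" and K: "K > 0"
    and deriv: "\<And>q. 5 < Re q \<Longrightarrow> 0 < \<sigma> * Im q \<Longrightarrow> (G has_field_derivative F q) (at q)"
    and bnd: "\<And>q. 5 < Re q \<Longrightarrow> 0 < \<sigma> * Im q \<Longrightarrow> cmod (F q) \<le> C * cmod q powr e"
  shows "\<And>t t'. 5 < Re t \<Longrightarrow> 0 < \<sigma> * Im t \<Longrightarrow> K \<le> Re t \<Longrightarrow>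
      5 < Re t' \<Longrightarrow> 0 < \<sigma> * Im t' \<Longrightarrow> K \<le> Re t' \<Longrightarrow>
      cmod (G t - G t') \<le> 2 * (C * 2 powr (-e) * K powr (e+1) / (-(e+1)))"
proof -
  define C2 where "C2 = C * 2 powr (-e)"
  have C2: "C2 \<ge> 0" using C by (simp add: C2_def)
  have ss: "\<sigma> * \<sigma> = 1" using \<sigma> by auto
  have sabs: "\<And>x. \<sigma> * x \<le> \<bar>x\<bar>" using \<sigma> by auto
  have Kmono: "\<And>r. K \<le> r \<Longrightarrow> C2 * r powr (e+1) / (-(e+1)) \<le> C2 * K powr (e+1) / (-(e+1))"
  proof -
    fix r assume "K \<le> r"
    then have "r powr (e+1) \<le> K powr (e+1)" by (intro powr_mono2') (use e K in auto)
    then show "C2 * r powr (e+1) / (-(e+1)) \<le> C2 * K powr (e+1) / (-(e+1))"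
      using C2 e by (intro divide_right_mono mult_left_mono) auto
  qed
  have main: "cmod (G t - G t') \<le> 2 * (C2 * K powr (e+1) / (-(e+1)))"
    if t: "5 < Re t" "0 < \<sigma> * Im t" "K \<le> Re t" and t': "5 < Re t'" "0 < \<sigma> * Im t'" "K \<le> Re t'"
      and le: "\<sigma> * Im t \<le> \<sigma> * Im t'" for t t'
  proof -
    define m where "m = Complex (Re t) (Im t')"
    have v: "cmod (G (t + of_real (\<sigma> * (Im t' - Im t)) * (of_real \<sigma> * \<i>)) - G t) \<le> C2 * (Re t) powr (e+1) / (-(e+1))"
    proof (rule seg_bound[where f=F and C=C2 and e=e and c="Re t"])
      show "0 \<le> \<sigma> * (Im t' - Im t)" using le by (simp add: algebra_simps)
      show "0 < Re t" "e < -1" "0 \<le> C2" using t e C2 by auto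
      show "cmod (complex_of_real \<sigma> * \<i>) = 1" using \<sigma> by auto
      fix s assume s: "0 \<le> s" "s \<le> \<sigma> * (Im t' - Im t)"
      define q where "q = t + complex_of_real s * (complex_of_real \<sigma> * \<i>)"
      have Req: "Re q = Re t" and Imq: "Im q = Im t + s * \<sigma>" by (simp_all add: q_def)
      have sq: "\<sigma> * Im q = \<sigma> * Im t + s" unfolding Imq using \<sigma> by auto
      have q5: "5 < Re q" "0 < \<sigma> * Im q" using t s Req sq by auto
      show "(G has_field_derivative F q) (at q)" using deriv[OF q5] .
      have r1: "Re t \<le> cmod q" using complex_Re_le_cmod[of q] Req by simp
      have r2: "s \<le> cmod q" using abs_Im_le_cmod[of q] sabs[of "Im q"] sq t(2) by linarith
      have "(Re t + s) / 2 \<le> cmod q" using add_mono[OF r1 r2] by (simp add: field_simps)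
      then show "cmod (F q) \<le> C2 * (Re t + s) powr e"
        unfolding C2_def using pt_bound[where F=F and q=q and c="Re t" and s=s and C=C and e=e, OF e C _ _ bnd[OF q5]] t s by simp
    qed
    have mv: "t + of_real (\<sigma> * (Im t' - Im t)) * (of_real \<sigma> * \<i>) = m"
      unfolding m_def using \<sigma> by (auto simp: complex_eq_iff)
    have v2: "cmod (G m - G t) \<le> C2 * K powr (e+1) / (-(e+1))"
      using v mv Kmono[OF t(3)] by simp
    have h: "cmod (G m - G t') \<le> C2 * K powr (e+1) / (-(e+1))"
    proof (cases "Re t \<le> Re t'")
      case True
      have "cmod (G (m + of_real (Re t' - Re t) * 1) - G m) \<le> C2 * (Re t) powr (e+1) / (-(e+1))"
      proof (rule seg_bound[where f=F and C=C2 and e=e and c="Re t"])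
        show "0 \<le> Re t' - Re t" using True by simp
        show "0 < Re t" "e < -1" "0 \<le> C2" "cmod 1 = 1" using t e C2 by auto
        fix s assume s: "0 \<le> s" "s \<le> Re t' - Re t"
        define q where "q = m + complex_of_real s * 1"
        have Req: "Re q = Re t + s" and Imq: "Im q = Im t'" by (simp_all add: q_def m_def)
        have q5: "5 < Re q" "0 < \<sigma> * Im q" using t t' s Req Imq by auto
        show "(G has_field_derivative F q) (at q)" using deriv[OF q5] by (simp add: q_def)
        have "(Re t + s) / 2 \<le> cmod q"
          using complex_Re_le_cmod[of q] Req t s by (simp add: field_simps)
        then show "cmod (F (m + complex_of_real s * 1)) \<le> C2 * (Re t + s) powr e"
          unfolding C2_def using pt_bound[where F=F and q=q and c="Re t" and s=s and C=C and e=e, OF e C _ _ bnd[OF q5]] t s by (simp add: q_def)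
      qed
      moreover have "m + of_real (Re t' - Re t) * 1 = t'" by (simp add: m_def complex_eq_iff)
      ultimately have "cmod (G t' - G m) \<le> C2 * K powr (e+1) / (-(e+1))"
        using Kmono[OF t(3)] by simp
      then show ?thesis by (simp add: norm_minus_commute)
    next
      case False
      have "cmod (G (t' + of_real (Re t - Re t') * 1) - G t') \<le> C2 * (Re t') powr (e+1) / (-(e+1))"
      proof (rule seg_bound[where f=F and C=C2 and e=e and c="Re t'"])
        show "0 \<le> Re t - Re t'" using False by simp
        show "0 < Re t'" "e < -1" "0 \<le> C2" "cmod 1 = 1" using t' e C2 by auto
        fix s assume s: "0 \<le> s" "s \<le> Re t - Re t'"
        define q where "q = t' + complex_of_real s * 1"
        have Req: "Re q = Re t' + s" and Imq: "Im q = Im t'" by (simp_all add: q_def)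
        have q5: "5 < Re q" "0 < \<sigma> * Im q" using t' s Req Imq by auto
        show "(G has_field_derivative F q) (at q)" using deriv[OF q5] by (simp add: q_def)
        have "(Re t' + s) / 2 \<le> cmod q"
          using complex_Re_le_cmod[of q] Req t' s by (simp add: field_simps)
        then show "cmod (F (t' + complex_of_real s * 1)) \<le> C2 * (Re t' + s) powr e"
          unfolding C2_def using pt_bound[where F=F and q=q and c="Re t'" and s=s and C=C and e=e, OF e C _ _ bnd[OF q5]] t' s by (simp add: q_def)
      qed
      moreover have "t' + of_real (Re t - Re t') * 1 = m" by (simp add: m_def complex_eq_iff)
      ultimately show ?thesis using Kmono[OF t'(3)] by simp
    qed
    have "cmod (G t - G t') \<le> cmod (G m - G t) + cmod (G m - G t')"
      using norm_triangle_ineq[of "G t - G m" "G m - G t'"] by (simp add: norm_minus_commute)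
    then show ?thesis using v2 h by simp
  qed
  fix t t' assume t: "5 < Re t" "0 < \<sigma> * Im t" "K \<le> Re t" and t': "5 < Re t'" "0 < \<sigma> * Im t'" "K \<le> Re t'"
  show "cmod (G t - G t') \<le> 2 * (C * 2 powr (-e) * K powr (e+1) / (-(e+1)))"
  proof (cases "\<sigma> * Im t \<le> \<sigma> * Im t'")
    case True
    then show ?thesis using main[OF t t'] by (simp add: C2_def)
  next
    case False
    then show ?thesis using main[OF t' t] by (simp add: C2_def norm_minus_commute)
  qed
qed

lemma limit_Q:
  fixes \<sigma> C e :: real and G F :: "complex \<Rightarrow> complex" and \<gamma> :: "real \<Rightarrow> complex"
  assumes \<sigma>: "\<sigma> = 1 \<or> \<sigma> = -1" and e: "e < -1" and C: "C \<ge> 0"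
    and deriv: "\<And>q. 5 < Re q \<Longrightarrow> 0 < \<sigma> * Im q \<Longrightarrow> (G has_field_derivative F q) (at q)"
    and bnd: "\<And>q. 5 < Re q \<Longrightarrow> 0 < \<sigma> * Im q \<Longrightarrow> cmod (F q) \<le> C * cmod q powr e"
    and lim: "filterlim (\<lambda>s. Re (\<gamma> s)) at_top Fl" and ev: "eventually (\<lambda>s. 0 < \<sigma> * Im (\<gamma> s)) Fl"
    and nt: "Fl \<noteq> bot"
  shows "\<exists>L. ((\<lambda>s. G (\<gamma> s)) \<longlongrightarrow> L) Fl"
proof -
  define c0 where "c0 = 2 * C * 2 powr (-e) / (-(e+1))"
  define B where "B = (\<lambda>K::real. c0 * K powr (e+1))"
  have cb: "cmod (G t - G t') \<le> B K"
    if "K > 0" "5 < Re t" "0 < \<sigma> * Im t" "K \<le> Re t" "5 < Re t'" "0 < \<sigma> * Im t'" "K \<le> Re t'" for K t t'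
  proof -
    have "2 * (C * 2 powr (-e) * K powr (e+1) / (-(e+1))) = B K"
      unfolding B_def c0_def by (simp add: field_simps)
    then show ?thesis using cauchy_Q[OF \<sigma> e C that(1) deriv bnd that(2-7)] by simp
  qed
  have Blim: "(B \<longlongrightarrow> 0) at_top"
  proof -
    have "((\<lambda>K::real. K powr (e+1)) \<longlongrightarrow> 0) at_top"
      by (rule tendsto_neg_powr) (use e filterlim_ident in auto)
    then show ?thesis unfolding B_def by (rule tendsto_mult_right_zero)
  qed
  have getK: "\<exists>K\<ge>6. B K < \<epsilon>" if "\<epsilon> > 0" for \<epsilon>
  proof -
    have "eventually (\<lambda>K. B K < \<epsilon>) at_top" using order_tendstoD(2)[OF Blim that] .
    then obtain N where N: "\<And>K. K \<ge> N \<Longrightarrow> B K < \<epsilon>" by (auto simp: eventually_at_top_linorder)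
    show ?thesis by (rule exI[of _ "max N 6"]) (use N in auto)
  qed
  define a where "a = (\<lambda>n::nat. G (Complex (real n + 6) \<sigma>))"
  have aQ: "5 < Re (Complex (real n + 6) \<sigma>)" "0 < \<sigma> * Im (Complex (real n + 6) \<sigma>)" for n
    using \<sigma> by auto
  have "Cauchy a"
  proof (rule CauchyI)
    fix \<epsilon> :: real assume "\<epsilon> > 0"
    then obtain K where K: "K \<ge> 6" "B K < \<epsilon>" using getK by blast
    obtain M :: nat where M: "real M \<ge> K" using real_arch_simple by blast
    show "\<exists>M. \<forall>m\<ge>M. \<forall>n\<ge>M. norm (a m - a n) < \<epsilon>"
    proof (intro exI[of _ M] allI impI)
      fix m n :: nat assume "m \<ge> M" "n \<ge> M"
      then have "real m \<ge> K" "real n \<ge> K" using M by auto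
      then have "cmod (a m - a n) \<le> B K"
        unfolding a_def by (intro cb aQ) (use K in auto)
      then show "norm (a m - a n) < \<epsilon>" using K by simp
    qed
  qed
  then obtain L where L: "a \<longlonglongrightarrow> L" by (auto simp: Cauchy_convergent_iff convergent_def)
  have "((\<lambda>s. G (\<gamma> s)) \<longlongrightarrow> L) Fl"
  proof (rule tendstoI)
    fix \<epsilon> :: real assume "\<epsilon> > 0"
    then obtain K where K: "K \<ge> 6" "B K < \<epsilon>" using getK by blast
    have "eventually (\<lambda>s. K \<le> Re (\<gamma> s)) Fl" using lim by (simp add: filterlim_at_top)
    then show "eventually (\<lambda>s. dist (G (\<gamma> s)) L < \<epsilon>) Fl"
      using ev
    proof eventually_elim
      case (elim s)
      have "norm (G (\<gamma> s) - L) \<le> B K"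
      proof (rule Lim_norm_ubound[of sequentially "\<lambda>n. G (\<gamma> s) - a n"])
        show "\<not> trivial_limit sequentially" by simp
        show "((\<lambda>n. G (\<gamma> s) - a n) \<longlongrightarrow> G (\<gamma> s) - L) sequentially"
          by (intro tendsto_intros L)
        obtain M :: nat where M: "real M \<ge> K" using real_arch_simple by blast
        show "eventually (\<lambda>n. norm (G (\<gamma> s) - a n) \<le> B K) sequentially"
          unfolding eventually_sequentially
        proof (intro exI[of _ M] allI impI)
          fix n assume "n \<ge> M"
          then have "real n \<ge> K" using M by auto
          then show "norm (G (\<gamma> s) - a n) \<le> B K"
            unfolding a_def by (intro cb aQ) (use K elim in auto)
        qed
      qed
      then show ?case using K by (simp add: dist_norm)
    qed
  qed
  then show ?thesis by blast
qed



lemma Q_dom: "5 < Re q \<Longrightarrow> 0 < \<sigma> * Im q \<Longrightarrow> q \<in> hank_domain"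
  by (auto simp: hank_domain_def)

lemma prim_Q:
  fixes \<sigma> :: real
  assumes \<sigma>: "\<sigma> = 1 \<or> \<sigma> = -1"
  shows "\<exists>G. \<forall>q. 5 < Re q \<longrightarrow> 0 < \<sigma> * Im q \<longrightarrow> (G has_field_derivative hank_integrand \<mu> z q) (at q)"
proof -
  define S where "S = {q. 5 < Re q \<and> 0 < \<sigma> * Im q}"
  have cvx: "convex S"
  proof (cases "\<sigma> = 1")
    case True
    then have "S = {q. Re q > 5} \<inter> {q. Im q > 0}" by (auto simp: S_def)
    then show ?thesis by (simp add: convex_Int convex_halfspace_Re_gt convex_halfspace_Im_gt)
  next
    case False
    then have "\<sigma> = -1" using \<sigma> by simp
    then have "S = {q. Re q > 5} \<inter> {q. Im q < 0}" by (auto simp: S_def)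
    then show ?thesis by (simp add: convex_Int convex_halfspace_Re_gt convex_halfspace_Im_lt)
  qed
  have o1: "open {q::complex. 5 < Re q}"
    by (rule open_Collect_less) (intro continuous_intros)+
  have o2: "open {q::complex. 0 < \<sigma> * Im q}"
    by (rule open_Collect_less) (intro continuous_intros)+
  have op: "open S"
  proof -
    have "S = {q::complex. 5 < Re q} \<inter> {q::complex. 0 < \<sigma> * Im q}" by (auto simp: S_def)
    then show ?thesis using open_Int[OF o1 o2] by simp
  qed
  have sub: "S \<subseteq> hank_domain"
  proof
    fix q assume "q \<in> S"
    then show "q \<in> hank_domain" unfolding S_def using Q_dom by blast
  qed
  have hol: "hank_integrand \<mu> z holomorphic_on S" using F_holo sub by (rule holomorphic_on_subset)
  have contS: "continuous_on S (hank_integrand \<mu> z)" using hol by (rule holomorphic_on_imp_continuous_on)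
  have dS: "hank_integrand \<mu> z field_differentiable at x" if "x \<in> interior S - {}" for x
  proof -
    have "x \<in> S" using that interior_subset by blast
    then show ?thesis by (rule holomorphic_on_imp_differentiable_at[OF hol op])
  qed
  obtain G where G: "\<And>x. x \<in> S \<Longrightarrow> (G has_field_derivative hank_integrand \<mu> z x) (at x within S)"
    using holomorphic_convex_primitive[OF cvx finite.emptyI contS dS] by metis
  show ?thesis
  proof (intro exI[of _ G] allI impI)
    fix q assume "5 < Re q" "0 < \<sigma> * Im q"
    then have qS: "q \<in> S" by (simp add: S_def)
    from G[OF qS] show "(G has_field_derivative hank_integrand \<mu> z q) (at q)"
      using at_within_open[OF qS op] by simp
  qed
qed

definition II :: "(real \<Rightarrow> complex) \<Rightarrow> complex \<Rightarrow> complex \<Rightarrow> real \<Rightarrow> complex" where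
  "II \<gamma> \<mu> z R = contour_integral (hseg \<gamma> R) (hank_integrand \<mu> z)"

lemma valid_hseg:
  assumes "hankel_contour \<gamma>" "R > 0"
  shows "valid_path (hseg \<gamma> R)" "path_image (hseg \<gamma> R) \<subseteq> hank_domain"
proof -
  have "\<gamma> piecewise_C1_differentiable_on {-R..R}" using assms by (simp add: hankel_contour_def)
  moreover have "(\<lambda>x. (2*R) * x + (-R)) ` {0..1} \<subseteq> {-R..R}" using assms(2) by auto
  ultimately have "\<gamma> piecewise_C1_differentiable_on ((\<lambda>x. (2*R) * x + (-R)) ` {0..1})"
    by (rule piecewise_C1_differentiable_on_subset)
  from piecewise_C1_differentiable_affine[OF this]
  show "valid_path (hseg \<gamma> R)" by (simp add: valid_path_def hseg_def o_def algebra_simps)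
  show "path_image (hseg \<gamma> R) \<subseteq> hank_domain"
    using assms(1) by (auto simp: path_image_def hseg_def hankel_contour_def)
qed

lemma int_hseg:
  assumes "hankel_contour \<gamma>" "R > 0"
  shows "hank_integrand \<mu> z contour_integrable_on hseg \<gamma> R"
  using contour_integrable_holomorphic_simple[OF F_holo open_dom valid_hseg[OF assms]] .

lemma hseg_split:
  assumes hk: "hankel_contour \<gamma>" and R0: "0 < R0" "R0 \<le> R"
    and Gp: "\<forall>q. 5 < Re q \<longrightarrow> 0 < 1 * Im q \<longrightarrow> (Gp has_field_derivative hank_integrand \<mu> z q) (at q)"
    and Gm: "\<forall>q. 5 < Re q \<longrightarrow> 0 < -1 * Im q \<longrightarrow> (Gm has_field_derivative hank_integrand \<mu> z q) (at q)"
    and inQp: "\<forall>s\<le>-R0. 5 < Re (\<gamma> s) \<and> 0 < 1 * Im (\<gamma> s)"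
    and inQm: "\<forall>s\<ge>R0. 5 < Re (\<gamma> s) \<and> 0 < -1 * Im (\<gamma> s)"
  shows "II \<gamma> \<mu> z R = (Gp (\<gamma> (-R0)) - Gp (\<gamma> (-R))) + II \<gamma> \<mu> z R0 + (Gm (\<gamma> R) - Gm (\<gamma> R0))"
proof -
  define F where "F = hank_integrand \<mu> z"
  define g where "g = hseg \<gamma> R"
  define v1 where "v1 = (R - R0) / (2*R)"
  define v2 where "v2 = (R + R0) / (2*R)"
  have Rp: "R > 0" using R0 by simp
  have vg: "valid_path g" unfolding g_def using valid_hseg[OF hk Rp] by simp
  have int: "F contour_integrable_on g" unfolding F_def g_def using int_hseg[OF hk Rp] .
  have v1i: "v1 \<in> {0..1}" "0 \<le> v1" using R0 by (auto simp: v1_def field_simps)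
  have v2i: "v2 \<in> {0..1}" "v2 \<le> 1" using R0 by (auto simp: v2_def field_simps)
  have gv1: "g v1 = \<gamma> (-R0)" using Rp by (simp add: g_def hseg_def v1_def field_simps)
  have gv2: "g v2 = \<gamma> R0" using Rp by (simp add: g_def hseg_def v2_def field_simps)
  have g0: "g 0 = \<gamma> (-R)" by (simp add: g_def hseg_def)
  have g1: "g 1 = \<gamma> R" by (simp add: g_def hseg_def)
  have c1: "contour_integral (subpath 0 v1 g) F + contour_integral (subpath v1 v2 g) F = contour_integral (subpath 0 v2 g) F"
    by (rule contour_integral_subpath_combine[OF int vg]) (use v1i v2i in auto)
  have c2: "contour_integral (subpath 0 v2 g) F + contour_integral (subpath v2 1 g) F = contour_integral (subpath 0 1 g) F"
    by (rule contour_integral_subpath_combine[OF int vg]) (use v1i v2i in auto)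
  have mid: "subpath v1 v2 g = hseg \<gamma> R0"
  proof
    fix x
    have "- R + 2 * R * ((v2 - v1) * x + v1) = - R0 + 2 * R0 * x"
      using Rp by (simp add: v1_def v2_def field_simps)
    then show "subpath v1 v2 g x = hseg \<gamma> R0 x" by (simp add: subpath_def g_def hseg_def)
  qed
  define S1 where "S1 = {q. 5 < Re q \<and> 0 < 1 * Im q}"
  define S2 where "S2 = {q. 5 < Re q \<and> 0 < -1 * Im q}"
  have first: "contour_integral (subpath 0 v1 g) F = Gp (\<gamma> (-R0)) - Gp (\<gamma> (-R))"
  proof -
    have "(F has_contour_integral (Gp (pathfinish (subpath 0 v1 g)) - Gp (pathstart (subpath 0 v1 g)))) (subpath 0 v1 g)"
    proof (rule contour_integral_primitive[where S=S1])
      show "\<And>x. x \<in> S1 \<Longrightarrow> (Gp has_field_derivative F x) (at x within S1)"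
        using Gp by (auto simp: S1_def F_def intro: has_field_derivative_at_within)
      show "valid_path (subpath 0 v1 g)" using valid_path_subpath[OF vg] v1i by auto
      have "path_image (subpath 0 v1 g) = g ` {0..v1}" using v1i by (simp add: path_image_subpath)
      also have "\<dots> \<subseteq> S1"
      proof
        fix q assume "q \<in> g ` {0..v1}"
        then obtain x where x: "0 \<le> x" "x \<le> v1" "q = g x" by auto
        have "- R + 2 * R * x \<le> - R + 2 * R * v1" using x Rp by simp
        also have "\<dots> = - R0" using Rp by (simp add: v1_def field_simps)
        finally show "q \<in> S1" using inQp x by (simp add: g_def hseg_def S1_def)
      qed
      finally show "path_image (subpath 0 v1 g) \<subseteq> S1" .
    qed
    then show ?thesis using gv1 g0 by (simp add: contour_integral_unique)
  qed
  have last: "contour_integral (subpath v2 1 g) F = Gm (\<gamma> R) - Gm (\<gamma> R0)"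
  proof -
    have "(F has_contour_integral (Gm (pathfinish (subpath v2 1 g)) - Gm (pathstart (subpath v2 1 g)))) (subpath v2 1 g)"
    proof (rule contour_integral_primitive[where S=S2])
      show "\<And>x. x \<in> S2 \<Longrightarrow> (Gm has_field_derivative F x) (at x within S2)"
        using Gm by (auto simp: S2_def F_def intro: has_field_derivative_at_within)
      show "valid_path (subpath v2 1 g)" using valid_path_subpath[OF vg] v2i by auto
      have "path_image (subpath v2 1 g) = g ` {v2..1}" using v2i by (simp add: path_image_subpath)
      also have "\<dots> \<subseteq> S2"
      proof
        fix q assume "q \<in> g ` {v2..1}"
        then obtain x where x: "v2 \<le> x" "x \<le> 1" "q = g x" by auto
        have "R0 = - R + 2 * R * v2" using Rp by (simp add: v2_def field_simps)
        also have "\<dots> \<le> - R + 2 * R * x" using x Rp by simp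
        finally show "q \<in> S2" using inQm x by (simp add: g_def hseg_def S2_def)
      qed
      finally show "path_image (subpath v2 1 g) \<subseteq> S2" .
    qed
    then show ?thesis using gv2 g1 by (simp add: contour_integral_unique)
  qed
  have "II \<gamma> \<mu> z R = contour_integral g F" by (simp add: II_def g_def F_def)
  also have "\<dots> = contour_integral (subpath 0 1 g) F" by simp
  also have "\<dots> = contour_integral (subpath 0 v1 g) F + contour_integral (subpath v1 v2 g) F + contour_integral (subpath v2 1 g) F"
    using c1 c2 by simp
  also have "\<dots> = (Gp (\<gamma> (-R0)) - Gp (\<gamma> (-R))) + II \<gamma> \<mu> z R0 + (Gm (\<gamma> R) - Gm (\<gamma> R0))"
    unfolding first last mid by (simp add: II_def F_def)
  finally show ?thesis .
qed

lemma II_conv: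
  assumes mz: "Re z < Re \<mu>" and hk: "hankel_contour \<gamma>"
  shows "(II \<gamma> \<mu> z \<longlongrightarrow> hank_y \<gamma> \<mu> z) at_top"
proof -
  define F where "F = hank_integrand \<mu> z"
  define e where "e = Re z - Re \<mu> - 1"
  have e: "e < -1" using mz by (simp add: e_def)
  obtain C where C: "C > 0" "\<forall>t. 5 \<le> cmod t \<longrightarrow> t \<in> hank_domain \<longrightarrow> cmod (F t) \<le> C * cmod t powr e"
    using F_bound[of \<mu> z] unfolding F_def e_def by blast
  have bnd: "cmod (F q) \<le> C * cmod q powr e" if "5 < Re q" "0 < \<sigma> * Im q" for q \<sigma>
  proof -
    have "5 \<le> cmod q" using that(1) complex_Re_le_cmod[of q] by (meson less_le_trans less_imp_le)
    then show ?thesis using C(2) Q_dom[OF that] by blast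
  qed
  obtain Gp where Gp: "\<forall>q. 5 < Re q \<longrightarrow> 0 < 1 * Im q \<longrightarrow> (Gp has_field_derivative hank_integrand \<mu> z q) (at q)"
    using prim_Q[of 1 \<mu> z] by auto
  obtain Gm where Gm: "\<forall>q. 5 < Re q \<longrightarrow> 0 < -1 * Im q \<longrightarrow> (Gm has_field_derivative hank_integrand \<mu> z q) (at q)"
    using prim_Q[of "-1" \<mu> z] by auto
  have limt: "filterlim (\<lambda>s. Re (\<gamma> s)) at_top at_top" and limb: "filterlim (\<lambda>s. Re (\<gamma> s)) at_top at_bot"
    and evt: "\<forall>\<^sub>F s in at_top. Im (\<gamma> s) < 0" and evb: "\<forall>\<^sub>F s in at_bot. Im (\<gamma> s) > 0"
    using hk by (auto simp: hankel_contour_def)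
  obtain Lm where Lm: "((\<lambda>s. Gm (\<gamma> s)) \<longlongrightarrow> Lm) at_top"
  proof -
    have "\<exists>L. ((\<lambda>s. Gm (\<gamma> s)) \<longlongrightarrow> L) at_top"
    proof (rule limit_Q[where \<sigma>="-1" and e=e and C=C and F=F and G=Gm and \<gamma>=\<gamma> and Fl=at_top])
      show "\<And>q. 5 < Re q \<Longrightarrow> 0 < -1 * Im q \<Longrightarrow> (Gm has_field_derivative F q) (at q)"
        using Gm by (simp add: F_def)
      show "\<And>q. 5 < Re q \<Longrightarrow> 0 < -1 * Im q \<Longrightarrow> cmod (F q) \<le> C * cmod q powr e" by (rule bnd)
      show "\<forall>\<^sub>F s in at_top. 0 < -1 * Im (\<gamma> s)" using evt by simp
    qed (use e C limt in auto)
    then show ?thesis using that by blast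
  qed
  obtain Lp where Lp: "((\<lambda>s. Gp (\<gamma> s)) \<longlongrightarrow> Lp) at_bot"
  proof -
    have "\<exists>L. ((\<lambda>s. Gp (\<gamma> s)) \<longlongrightarrow> L) at_bot"
    proof (rule limit_Q[where \<sigma>="1" and e=e and C=C and F=F and G=Gp and \<gamma>=\<gamma> and Fl=at_bot])
      show "\<And>q. 5 < Re q \<Longrightarrow> 0 < 1 * Im q \<Longrightarrow> (Gp has_field_derivative F q) (at q)"
        using Gp by (simp add: F_def)
      show "\<And>q. 5 < Re q \<Longrightarrow> 0 < 1 * Im q \<Longrightarrow> cmod (F q) \<le> C * cmod q powr e" by (rule bnd)
      show "\<forall>\<^sub>F s in at_bot. 0 < 1 * Im (\<gamma> s)" using evb by simp
    qed (use e C limb in auto)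
    then show ?thesis using that by blast
  qed
  have Lp': "((\<lambda>R. Gp (\<gamma> (-R))) \<longlongrightarrow> Lp) at_top"
    using filterlim_compose[OF Lp filterlim_uminus_at_bot_at_top] by simp
  have "\<forall>Z. \<forall>\<^sub>F s in at_top. Z \<le> Re (\<gamma> s)" using limt by (simp add: filterlim_at_top)
  then have e6: "\<forall>\<^sub>F s in at_top. 6 \<le> Re (\<gamma> s)" by blast
  have "\<forall>\<^sub>F s in at_top. 5 < Re (\<gamma> s) \<and> Im (\<gamma> s) < 0"
    using eventually_conj[OF e6 evt] by (rule eventually_mono) simp
  then obtain N1 where N1: "\<forall>s\<ge>N1. 5 < Re (\<gamma> s) \<and> Im (\<gamma> s) < 0"
    by (auto simp: eventually_at_top_linorder)
  have "\<forall>Z. \<forall>\<^sub>F s in at_bot. Z \<le> Re (\<gamma> s)" using limb by (simp add: filterlim_at_top)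
  then have e6': "\<forall>\<^sub>F s in at_bot. 6 \<le> Re (\<gamma> s)" by blast
  have "\<forall>\<^sub>F s in at_bot. 5 < Re (\<gamma> s) \<and> Im (\<gamma> s) > 0"
    using eventually_conj[OF e6' evb] by (rule eventually_mono) simp
  then obtain N2 where N2: "\<forall>s\<le>N2. 5 < Re (\<gamma> s) \<and> Im (\<gamma> s) > 0"
    by (auto simp: eventually_at_bot_linorder)
  define R0 where "R0 = max (max N1 (-N2)) 1"
  have R0: "0 < R0" by (simp add: R0_def)
  have inQp: "\<forall>s\<le>-R0. 5 < Re (\<gamma> s) \<and> 0 < 1 * Im (\<gamma> s)"
    using N2 by (auto simp: R0_def)
  have inQm: "\<forall>s\<ge>R0. 5 < Re (\<gamma> s) \<and> 0 < -1 * Im (\<gamma> s)"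
    using N1 by (auto simp: R0_def)
  have ev: "\<forall>\<^sub>F R in at_top. (Gp (\<gamma> (-R0)) - Gp (\<gamma> (-R))) + II \<gamma> \<mu> z R0 + (Gm (\<gamma> R) - Gm (\<gamma> R0)) = II \<gamma> \<mu> z R"
    unfolding eventually_at_top_linorder
  proof (rule exI[of _ R0], intro allI impI)
    fix R assume RR: "R0 \<le> R"
    show "(Gp (\<gamma> (-R0)) - Gp (\<gamma> (-R))) + II \<gamma> \<mu> z R0 + (Gm (\<gamma> R) - Gm (\<gamma> R0)) = II \<gamma> \<mu> z R"
      by (rule sym[OF hseg_split[OF hk R0 RR Gp Gm inQp inQm]])
  qed
  have "((\<lambda>R. (Gp (\<gamma> (-R0)) - Gp (\<gamma> (-R))) + II \<gamma> \<mu> z R0 + (Gm (\<gamma> R) - Gm (\<gamma> R0)))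
     \<longlongrightarrow> (Gp (\<gamma> (-R0)) - Lp) + II \<gamma> \<mu> z R0 + (Lm - Gm (\<gamma> R0))) at_top"
    by (intro tendsto_intros Lp' Lm)
  then have lim: "(II \<gamma> \<mu> z \<longlongrightarrow> (Gp (\<gamma> (-R0)) - Lp) + II \<gamma> \<mu> z R0 + (Lm - Gm (\<gamma> R0))) at_top"
    by (rule Lim_transform_eventually[OF _ ev])
  have hy: "hank_y \<gamma> \<mu> z = Lim at_top (II \<gamma> \<mu> z)"
    unfolding hank_y_def II_def[abs_def] by simp
  have "Lim at_top (II \<gamma> \<mu> z) = (Gp (\<gamma> (-R0)) - Lp) + II \<gamma> \<mu> z R0 + (Lm - Gm (\<gamma> R0))"
    by (rule tendsto_Lim[OF _ lim]) simp
  then have "hank_y \<gamma> \<mu> z = (Gp (\<gamma> (-R0)) - Lp) + II \<gamma> \<mu> z R0 + (Lm - Gm (\<gamma> R0))"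
    using hy by simp
  then show ?thesis using lim by simp
qed

lemma Y_B:
  assumes mz: "Re z < Re \<mu>" and hk: "hankel_contour \<gamma>"
  shows "hank_y \<gamma> \<mu> z = hank_y \<gamma> \<mu> (z-1) + hank_y \<gamma> (\<mu>-1) (z-1) / 2 - hank_y \<gamma> (\<mu>+1) (z-1) / 2"
proof -
  have ev: "\<forall>\<^sub>F R in at_top. II \<gamma> \<mu> (z-1) R + II \<gamma> (\<mu>-1) (z-1) R / 2 - II \<gamma> (\<mu>+1) (z-1) R / 2 = II \<gamma> \<mu> z R"
    unfolding eventually_at_top_linorder
  proof (intro exI[of _ 1] allI impI)
    fix R :: real assume "R \<ge> 1"
    then have Rp: "R > 0" by simp
    note int = int_hseg[OF hk Rp]
    have "II \<gamma> \<mu> z R = contour_integral (hseg \<gamma> R) (\<lambda>t. hank_integrand \<mu> (z-1) t + hank_integrand (\<mu>-1) (z-1) t / 2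
           - hank_integrand (\<mu>+1) (z-1) t / 2)"
      unfolding II_def
    proof (rule contour_integral_eq)
      fix x assume "x \<in> path_image (hseg \<gamma> R)"
      then have "x \<in> hank_domain" using valid_hseg(2)[OF hk Rp] by blast
      then show "hank_integrand \<mu> z x = hank_integrand \<mu> (z-1) x + hank_integrand (\<mu>-1) (z-1) x / 2
           - hank_integrand (\<mu>+1) (z-1) x / 2" by (rule F_B)
    qed
    also have "\<dots> = II \<gamma> \<mu> (z-1) R + II \<gamma> (\<mu>-1) (z-1) R / 2 - II \<gamma> (\<mu>+1) (z-1) R / 2"
      unfolding II_def
      by (intro contour_integral_unique has_contour_integral_diff has_contour_integral_add
            has_contour_integral_div has_contour_integral_integral int)
    finally show "II \<gamma> \<mu> (z-1) R + II \<gamma> (\<mu>-1) (z-1) R / 2 - II \<gamma> (\<mu>+1) (z-1) R / 2 = II \<gamma> \<mu> z R" by simp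
  qed
  have l1: "(II \<gamma> \<mu> (z-1) \<longlongrightarrow> hank_y \<gamma> \<mu> (z-1)) at_top" using II_conv[OF _ hk] mz by simp
  have l2: "(II \<gamma> (\<mu>-1) (z-1) \<longlongrightarrow> hank_y \<gamma> (\<mu>-1) (z-1)) at_top" using II_conv[OF _ hk] mz by simp
  have l3: "(II \<gamma> (\<mu>+1) (z-1) \<longlongrightarrow> hank_y \<gamma> (\<mu>+1) (z-1)) at_top" using II_conv[OF _ hk] mz by simp
  have "((\<lambda>R. II \<gamma> \<mu> (z-1) R + II \<gamma> (\<mu>-1) (z-1) R / 2 - II \<gamma> (\<mu>+1) (z-1) R / 2) \<longlongrightarrow>
        hank_y \<gamma> \<mu> (z-1) + hank_y \<gamma> (\<mu>-1) (z-1) / 2 - hank_y \<gamma> (\<mu>+1) (z-1) / 2) at_top"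
    by (intro tendsto_intros l1 l2 l3) auto
  then have "(II \<gamma> \<mu> z \<longlongrightarrow> hank_y \<gamma> \<mu> (z-1) + hank_y \<gamma> (\<mu>-1) (z-1) / 2 - hank_y \<gamma> (\<mu>+1) (z-1) / 2) at_top"
    by (rule Lim_transform_eventually[OF _ ev])
  from tendsto_unique[OF _ II_conv[OF mz hk] this] show ?thesis by simp
qed

lemma Y_A:
  assumes mz: "Re z < Re \<mu>" and hk: "hankel_contour \<gamma>"
  shows "- \<mu> * hank_y \<gamma> \<mu> z + z / 2 * (hank_y \<gamma> (\<mu>-1) (z-1) + hank_y \<gamma> (\<mu>+1) (z-1)) = 0"
proof -
  have ev: "\<forall>\<^sub>F R in at_top. gg \<mu> z (\<gamma> R) - gg \<mu> z (\<gamma> (-R)) =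
      - \<mu> * II \<gamma> \<mu> z R + z / 2 * (II \<gamma> (\<mu>-1) (z-1) R + II \<gamma> (\<mu>+1) (z-1) R)"
    unfolding eventually_at_top_linorder
  proof (intro exI[of _ 1] allI impI)
    fix R :: real assume "R \<ge> 1"
    then have Rp: "R > 0" by simp
    note int = int_hseg[OF hk Rp]
    note vh = valid_hseg[OF hk Rp]
    have "((\<lambda>t. - \<mu> * hank_integrand \<mu> z t + z / 2 * (hank_integrand (\<mu>-1) (z-1) t + hank_integrand (\<mu>+1) (z-1) t))
          has_contour_integral (gg \<mu> z (pathfinish (hseg \<gamma> R)) - gg \<mu> z (pathstart (hseg \<gamma> R)))) (hseg \<gamma> R)"
      by (rule contour_integral_primitive[OF _ vh(1) vh(2)])
         (use gg_deriv in \<open>blast intro: has_field_derivative_at_within\<close>)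
    then have "gg \<mu> z (\<gamma> R) - gg \<mu> z (\<gamma> (-R)) = contour_integral (hseg \<gamma> R)
        (\<lambda>t. - \<mu> * hank_integrand \<mu> z t + z / 2 * (hank_integrand (\<mu>-1) (z-1) t + hank_integrand (\<mu>+1) (z-1) t))"
      by (simp add: contour_integral_unique pathfinish_def pathstart_def hseg_def)
    also have "\<dots> = - \<mu> * II \<gamma> \<mu> z R + z / 2 * (II \<gamma> (\<mu>-1) (z-1) R + II \<gamma> (\<mu>+1) (z-1) R)"
      unfolding II_def
      by (intro contour_integral_unique has_contour_integral_add has_contour_integral_lmul
            has_contour_integral_integral int)
    finally show "gg \<mu> z (\<gamma> R) - gg \<mu> z (\<gamma> (-R)) =
      - \<mu> * II \<gamma> \<mu> z R + z / 2 * (II \<gamma> (\<mu>-1) (z-1) R + II \<gamma> (\<mu>+1) (z-1) R)" .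
  qed
  have g1: "((\<lambda>R. gg \<mu> z (\<gamma> R)) \<longlongrightarrow> 0) at_top" using gg_tendsto[OF mz hk] by simp
  have g2: "((\<lambda>R. gg \<mu> z (\<gamma> (-R))) \<longlongrightarrow> 0) at_top"
    using filterlim_compose[OF gg_tendsto(2)[OF mz hk] filterlim_uminus_at_bot_at_top] by simp
  have "((\<lambda>R. gg \<mu> z (\<gamma> R) - gg \<mu> z (\<gamma> (-R))) \<longlongrightarrow> 0 - 0) at_top"
    by (intro tendsto_intros g1 g2)
  then have A: "((\<lambda>R. - \<mu> * II \<gamma> \<mu> z R + z / 2 * (II \<gamma> (\<mu>-1) (z-1) R + II \<gamma> (\<mu>+1) (z-1) R)) \<longlongrightarrow> 0) at_top"
    using Lim_transform_eventually[OF _ ev] by simp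
  have l0: "(II \<gamma> \<mu> z \<longlongrightarrow> hank_y \<gamma> \<mu> z) at_top" using II_conv[OF mz hk] .
  have l2: "(II \<gamma> (\<mu>-1) (z-1) \<longlongrightarrow> hank_y \<gamma> (\<mu>-1) (z-1)) at_top" using II_conv[OF _ hk] mz by simp
  have l3: "(II \<gamma> (\<mu>+1) (z-1) \<longlongrightarrow> hank_y \<gamma> (\<mu>+1) (z-1)) at_top" using II_conv[OF _ hk] mz by simp
  have B: "((\<lambda>R. - \<mu> * II \<gamma> \<mu> z R + z / 2 * (II \<gamma> (\<mu>-1) (z-1) R + II \<gamma> (\<mu>+1) (z-1) R)) \<longlongrightarrow>
     - \<mu> * hank_y \<gamma> \<mu> z + z / 2 * (hank_y \<gamma> (\<mu>-1) (z-1) + hank_y \<gamma> (\<mu>+1) (z-1))) at_top"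
    by (intro tendsto_intros l0 l2 l3)
  from tendsto_unique[OF _ B A] show ?thesis by simp
qed

lemma EQ12:
  assumes mz: "Re z < Re \<mu>" and hk: "hankel_contour \<gamma>"
  shows "z * (hank_y \<gamma> \<mu> z - hank_y \<gamma> \<mu> (z - 1)) + \<mu> * hank_y \<gamma> \<mu> z - z * hank_y \<gamma> (\<mu> - 1) (z - 1) = 0"
    "z * (hank_y \<gamma> \<mu> z - hank_y \<gamma> \<mu> (z - 1)) - \<mu> * hank_y \<gamma> \<mu> z + z * hank_y \<gamma> (\<mu> + 1) (z - 1) = 0"
proof -
  define a where "a = hank_y \<gamma> \<mu> z"
  define b where "b = hank_y \<gamma> \<mu> (z-1)"
  define P where "P = hank_y \<gamma> (\<mu>-1) (z-1)"
  define M where "M = hank_y \<gamma> (\<mu>+1) (z-1)"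
  have B: "a - (b + P/2 - M/2) = 0" using Y_B[OF mz hk] unfolding a_def b_def P_def M_def by simp
  have A: "- \<mu> * a + z / 2 * (P + M) = 0" using Y_A[OF mz hk] unfolding a_def P_def M_def .
  have "z * (a - b) + \<mu> * a - z * P = z * (a - (b + P/2 - M/2)) - (- \<mu> * a + z / 2 * (P + M))"
    by (simp add: field_simps)
  also have "\<dots> = 0" using A B by simp
  finally show "z * (hank_y \<gamma> \<mu> z - hank_y \<gamma> \<mu> (z - 1)) + \<mu> * hank_y \<gamma> \<mu> z - z * hank_y \<gamma> (\<mu> - 1) (z - 1) = 0"
    unfolding a_def b_def P_def .
  have "z * (a - b) - \<mu> * a + z * M = z * (a - (b + P/2 - M/2)) + (- \<mu> * a + z / 2 * (P + M))"
    by (simp add: field_simps)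
  also have "\<dots> = 0" using A B by simp
  finally show "z * (hank_y \<gamma> \<mu> z - hank_y \<gamma> \<mu> (z - 1)) - \<mu> * hank_y \<gamma> \<mu> z + z * hank_y \<gamma> (\<mu> + 1) (z - 1) = 0"
    unfolding a_def b_def M_def .
qed

lemma bessel_alg:
  fixes a b c P P2 x \<nu> :: complex
  assumes E1: "x * (a - b) + \<nu> * a - x * P = 0"
    and E1': "(x-1) * (b - c) + \<nu> * b - (x-1) * P2 = 0"
    and E3: "(x-1) * (P - P2) - (\<nu>-1) * P + (x-1) * c = 0"
  shows "x * (x - 1) * (a - 2 * b + c) + x * (a - b) + x * (x - 1) * c - \<nu>\<^sup>2 * a = 0"
proof -
  have "x * (x - 1) * (a - 2 * b + c) + x * (a - b) + x * (x - 1) * c - \<nu>\<^sup>2 * a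
     = x * ((x-1) * (P - P2) - (\<nu>-1) * P + (x-1) * c)
       - x * ((x-1) * (b - c) + \<nu> * b - (x-1) * P2)
       + (x - \<nu>) * (x * (a - b) + \<nu> * a - x * P)"
    by (simp add: algebra_simps power2_eq_square)
  then show ?thesis using E1 E1' E3 by simp
qed

theorem mainTheorem7:
  fixes \<gamma> :: "real \<Rightarrow> complex" and \<nu> x :: complex
  assumes "Re x < Re \<nu>"
    and "hankel_contour \<gamma>"
    and "((\<lambda>s. powU (\<gamma> s) (- \<nu>) * (wB (\<gamma> s) powr x)) \<longlongrightarrow> 0) at_bot"
    and "((\<lambda>s. powU (\<gamma> s) (- \<nu>) * (wB (\<gamma> s) powr x)) \<longlongrightarrow> 0) at_top"
  shows "x * (hank_y \<gamma> \<nu> x - hank_y \<gamma> \<nu> (x - 1)) + \<nu> * hank_y \<gamma> \<nu> x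
           - x * hank_y \<gamma> (\<nu> - 1) (x - 1) = 0 \<and>
         x * (hank_y \<gamma> \<nu> x - hank_y \<gamma> \<nu> (x - 1)) - \<nu> * hank_y \<gamma> \<nu> x
           + x * hank_y \<gamma> (\<nu> + 1) (x - 1) = 0 \<and>
         x * (x - 1) * (hank_y \<gamma> \<nu> x - 2 * hank_y \<gamma> \<nu> (x - 1) + hank_y \<gamma> \<nu> (x - 2))
           + x * (hank_y \<gamma> \<nu> x - hank_y \<gamma> \<nu> (x - 1))
           + x * (x - 1) * hank_y \<gamma> \<nu> (x - 2) - \<nu>\<^sup>2 * hank_y \<gamma> \<nu> x = 0"
proof -
  note E = EQ12[OF assms(1,2)]
  have E1': "(x-1) * (hank_y \<gamma> \<nu> (x-1) - hank_y \<gamma> \<nu> (x-2)) + \<nu> * hank_y \<gamma> \<nu> (x-1)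
      - (x-1) * hank_y \<gamma> (\<nu>-1) (x-2) = 0"
  proof -
    have "Re (x-1) < Re \<nu>" using assms(1) by simp
    from EQ12(1)[OF this assms(2)] show ?thesis by (simp add: diff_diff_eq)
  qed
  have E3: "(x-1) * (hank_y \<gamma> (\<nu>-1) (x-1) - hank_y \<gamma> (\<nu>-1) (x-2)) - (\<nu>-1) * hank_y \<gamma> (\<nu>-1) (x-1)
      + (x-1) * hank_y \<gamma> \<nu> (x-2) = 0"
  proof -
    have "Re (x-1) < Re (\<nu>-1)" using assms(1) by simp
    from EQ12(2)[OF this assms(2)] show ?thesis by (simp add: diff_diff_eq)
  qed
  show ?thesis using E bessel_alg[OF E(1) E1' E3] by simp
qed

end
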